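(* For $n\geq 1$, let $E_n(p,q)=\sum_{\sigma\in\mathcal{Q}_n}p^{\operatorname{odd}(\sigma)}q^{\operatorname{even}(\sigma)}$. Then \[ E_n(p,q)=\sum_{k=0}^n {n\brack k}\,p^k(p+q)^{n-k}. \] In particular, for $n\geq 2$: $E_n(1,1)=(2n-1)!!$, $E_n(p,0)=n!\,p^n$, $E_n(1,-1)=1$ and $E_n(-1,1)=(-1)^n$.
   Context: Let $[n]_2$ be the multiset $\{1,1,2,2,\dots,n,n\}$. A Stirling permutation of order $n$ is a permutation $\sigma=\sigma_1\cdots\sigma_{2n}$ of $[n]_2$ such that for each $i\in[n]$ every entry between the two occurrences of $i$ is greater than $i$; $\mathcal{Q}_n$ is the set of these. A value $k\in[n]$ is an even (resp. odd) indexed entry of $\sigma$ if the first occurrence of $k$ in $\sigma$ is at an even (resp. odd) position; $\operatorname{even}(\sigma)$ and $\operatorname{odd}(\sigma)$ are the numbers of even and odd indexed entries (so $\operatorname{even}(\sigma)+\operatorname{odd}(\sigma)=n$). ${n\brack k}$ denotes the signless Stirling number of the first kind, the number of permutations of $[n]$ with exactly $k$ cycles. *)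

theory Defs
  imports Main "HOL-Library.Multiset" "HOL-Combinatorics.Stirling"
begin

text \<open>Stirling permutations of order n, as lists of length 2n (positions are 0-based
  list indices; 1-based position = index + 1).\<close>

definition stirling_perms :: "nat \<Rightarrow> nat list set" where
  "stirling_perms n = {s. mset s = mset (concat (map (\<lambda>i. [i, i]) [1..<n+1])) \<and>
     (\<forall>a b c. a < c \<and> c < b \<and> b < length s \<and> s ! a = s ! b \<longrightarrow> s ! c > s ! a)}"

definition first_pos :: "nat list \<Rightarrow> nat \<Rightarrow> nat" where
  "first_pos s k = (LEAST j. j < length s \<and> s ! j = k) + 1"

definition odd_entries :: "nat list \<Rightarrow> nat" where
  "odd_entries s = card {k \<in> set s. odd (first_pos s k)}"

definition even_entries :: "nat list \<Rightarrow> nat" where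
  "even_entries s = card {k \<in> set s. even (first_pos s k)}"

definition E_poly :: "nat \<Rightarrow> 'a::comm_ring_1 \<Rightarrow> 'a \<Rightarrow> 'a" where
  "E_poly n p q = (\<Sum>\<sigma>\<in>stirling_perms n. p ^ odd_entries \<sigma> * q ^ even_entries \<sigma>)"

text \<open>Double factorial of an odd number: (2n-1)!! = 1 * 3 * ... * (2n-1).\<close>
definition odd_double_fact :: "nat \<Rightarrow> nat" where
  "odd_double_fact n = (\<Prod>i<n. 2 * i + 1)"

end

theory Submission
  imports Defs
begin

lemma stirling_hom:
  "(\<Sum>k\<le>n. of_nat (stirling n k) * x ^ k * y ^ (n - k)) = (\<Prod>j<n. x + of_nat j * (y::'a::comm_ring_1))"
proof (induct n)
  case 0
  then show ?case by simp
next
  case (Suc n)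
  have z: "of_nat (n * stirling n 0) * y ^ Suc n = (0 :: 'a)" by (cases n) simp_all
  have z2: "of_nat n * (of_nat (stirling n 0)::'a) = 0" by (cases n) simp_all
  have "(\<Sum>k\<le>Suc n. of_nat (stirling (Suc n) k) * x ^ k * y ^ (Suc n - k)) =
      (of_nat (n * stirling n 0) * y ^ Suc n +
      (\<Sum>i\<le>n. of_nat (n * stirling n (Suc i)) * x ^ Suc i * y ^ (n - i))) +
      (\<Sum>i\<le>n. of_nat (stirling n i) * x ^ Suc i * y ^ (n - i))"
    by (subst sum.atMost_Suc_shift) (simp add: sum.distrib ring_distribs z z2)
  also have "(\<Sum>i\<le>n. of_nat (n * stirling n (Suc i)) * x ^ Suc i * y ^ (n - i))
     = (\<Sum>i\<le>Suc n. of_nat (n * stirling n i) * x ^ i * y ^ (Suc n - i)) - of_nat (n * stirling n 0) * y ^ Suc n"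
    by (subst sum.atMost_Suc_shift) simp
  also have "(\<Sum>i\<le>Suc n. of_nat (n * stirling n i) * x ^ i * y ^ (Suc n - i))
     = (\<Sum>i\<le>n. of_nat (n * stirling n i) * x ^ i * y ^ (Suc n - i))"
    by simp
  also have "\<dots> = of_nat n * y * (\<Sum>i\<le>n. of_nat (stirling n i) * x ^ i * y ^ (n - i))"
    by (simp add: sum_distrib_left Suc_diff_le algebra_simps)
  also have "(\<Sum>i\<le>n. of_nat (stirling n i) * x ^ Suc i * y ^ (n - i)) = x * (\<Sum>i\<le>n. of_nat (stirling n i) * x ^ i * y ^ (n - i))"
    by (simp add: sum_distrib_left algebra_simps)
  finally show ?case using Suc by (simp add: algebra_simps z z2)
qed

definition ins :: "nat \<Rightarrow> 'a \<Rightarrow> 'a list \<Rightarrow> 'a list" where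
  "ins i m s = take i s @ m # m # drop i s"

lemma length_ins: "i \<le> length s \<Longrightarrow> length (ins i m s) = length s + 2"
  by (simp add: ins_def)

lemma nth_ins: "i \<le> length s \<Longrightarrow> j < length s + 2 \<Longrightarrow>
  ins i m s ! j = (if j < i then s ! j else if j < i + 2 then m else s ! (j - 2))"
proof -
  assume a: "i \<le> length s" "j < length s + 2"
  show ?thesis
  proof (cases "j < i")
    case True thus ?thesis using a by (simp add: ins_def nth_append)
  next
    case False
    then obtain d where d: "j = i + d" by (metis le_Suc_ex not_less)
    show ?thesis using a
      by (cases d; cases "d - 1") (auto simp: ins_def nth_append d min_def)
  qed
qed

lemma mset_ins: "mset (ins i m s) = mset s + {#m, m#}"
proof -
  have "mset (ins i m s) = mset (take i s) + mset (drop i s) + {#m, m#}"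
    by (simp add: ins_def)
  also have "mset (take i s) + mset (drop i s) = mset s"
    by (metis append_take_drop_id mset_append)
  finally show ?thesis .
qed

abbreviation M :: "nat \<Rightarrow> nat multiset" where
  "M n \<equiv> mset (concat (map (\<lambda>i. [i, i]) [1..<n+1]))"

lemma M_Suc: "M (Suc n) = M n + {#Suc n, Suc n#}"
  by simp

lemma set_M: "set_mset (M n) = {1..n}"
  by auto

lemma stirling_set: "s \<in> stirling_perms n \<Longrightarrow> set s = {1..n}"
  unfolding stirling_perms_def by (metis (mono_tags, lifting) mem_Collect_eq set_M set_mset_mset)

lemma stirling_length: "s \<in> stirling_perms n \<Longrightarrow> length s = 2 * n"
proof -
  assume "s \<in> stirling_perms n"
  hence "size (mset s) = size (M n)" unfolding stirling_perms_def by simp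
  moreover have "size (M n) = 2 * n" by (induct n) auto
  ultimately show ?thesis by simp
qed

lemma ins_stirling:
  assumes s: "s \<in> stirling_perms n" and i: "i \<le> length s"
  shows "ins i (Suc n) s \<in> stirling_perms (Suc n)"
proof -
  let ?L = "length s"
  have P: "\<And>a b c. a < c \<Longrightarrow> c < b \<Longrightarrow> b < ?L \<Longrightarrow> s!a = s!b \<Longrightarrow> s!c > s!a"
    using s unfolding stirling_perms_def by blast
  have B: "\<And>j. j < ?L \<Longrightarrow> s!j \<le> n"
    using stirling_set[OF s] by (metis atLeastAtMost_iff nth_mem)
  have "\<forall>a b c. a < c \<and> c < b \<and> b < length (ins i (Suc n) s) \<and> ins i (Suc n) s ! a = ins i (Suc n) s ! b
      \<longrightarrow> ins i (Suc n) s ! c > ins i (Suc n) s ! a"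
  proof (intro allI impI)
    fix a b c assume h: "a < c \<and> c < b \<and> b < length (ins i (Suc n) s) \<and> ins i (Suc n) s ! a = ins i (Suc n) s ! b"
    hence lb: "b < ?L + 2" using length_ins[OF i] by simp
    hence ab: "a < ?L + 2" "c < ?L + 2" using h by auto
    have eq: "ins i (Suc n) s ! a = ins i (Suc n) s ! b" using h by simp
    note nth = nth_ins[OF i lb] nth_ins[OF i ab(1)] nth_ins[OF i ab(2)]
    show "ins i (Suc n) s ! c > ins i (Suc n) s ! a"
    proof (cases "a < i")
      case True
      hence ta: "ins i (Suc n) s ! a = s ! a" using nth by simp
      have sa: "s!a \<le> n" using B True i by simp
      show ?thesis
      proof (cases "b < i")
        case True
        hence "s!a = s!b" using eq ta nth by simp
        moreover have "c < i" using True h by simp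
        ultimately show ?thesis using P[of a c b] h True i ta nth by simp
      next
        case False
        hence "\<not> b < i + 2" using eq ta nth sa by (auto split: if_splits)
        hence sab: "s!a = s!(b-2)" using eq ta nth False by simp
        show ?thesis
        proof (cases "c < i")
          case True
          then show ?thesis using P[of a c "b-2"] h sab \<open>\<not> b < i + 2\<close> lb ta nth by simp
        next
          case False
          show ?thesis
          proof (cases "c < i + 2")
            case True then show ?thesis using False ta nth sa by simp
          next
            case False
            have xx: "a < c - 2" "c - 2 < b - 2" "b - 2 < length s" using False \<open>a < i\<close> h lb by auto
            have tc: "ins i (Suc n) s ! c = s!(c-2)" using nth False by simp
            then show ?thesis using P[of a "c-2" "b-2"] sab ta tc xx by simp
          qed
        qed
      qed
    next
      case na: False
      show ?thesis
      proof (cases "a < i + 2")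
        case True
        hence ta: "ins i (Suc n) s ! a = Suc n" using nth na by simp
        have "b \<ge> i + 2" using h True na by simp
        hence "ins i (Suc n) s ! b = s ! (b-2)" using nth by simp
        moreover have "s ! (b-2) \<le> n" using B lb \<open>b \<ge> i + 2\<close> by simp
        ultimately show ?thesis using eq ta by simp
      next
        case False
        hence "ins i (Suc n) s ! a = s!(a-2)" "ins i (Suc n) s ! b = s!(b-2)" "ins i (Suc n) s ! c = s!(c-2)"
          using nth na h by auto
        moreover have "a - 2 < c - 2" "c - 2 < b - 2" "b - 2 < length s" using False h lb by auto
        ultimately show ?thesis using P[of "a-2" "c-2" "b-2"] eq by simp
      qed
    qed
  qed
  moreover have "mset (ins i (Suc n) s) = M (Suc n)"
    using s by (simp add: mset_ins stirling_perms_def)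
  ultimately show ?thesis unfolding stirling_perms_def by blast
qed

lemma stirling_decomp:
  assumes t: "t \<in> stirling_perms (Suc n)"
  shows "\<exists>s i. s \<in> stirling_perms n \<and> i \<le> length s \<and> t = ins i (Suc n) s"
proof -
  define m where "m = Suc n"
  have Pt: "\<And>a b c. a < c \<Longrightarrow> c < b \<Longrightarrow> b < length t \<Longrightarrow> t!a = t!b \<Longrightarrow> t!c > t!a"
    using t unfolding stirling_perms_def by blast
  have mt: "mset t = M n + {#m, m#}" using t unfolding stirling_perms_def m_def by simp
  have setb: "\<And>x. x \<in> set t \<Longrightarrow> x \<le> m" using stirling_set[OF t] m_def by auto
  have cM: "count (M n) m = 0" using set_M[of n] m_def
    by (metis atLeastAtMost_iff count_inI lessI not_less)
  have "m \<in># mset t" using mt by simp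
  hence "m \<in> set t" by simp
  then obtain xs ys where t1: "t = xs @ m # ys" and nx: "m \<notin> set xs" by (metis split_list_first)
  have "count (mset t) m = 2" using mt cM by simp
  moreover have "count (mset xs) m = 0" using nx by (metis count_eq_zero_iff set_mset_mset)
  ultimately have cy: "count (mset ys) m = 1" using t1 by simp
  hence "m \<in> set ys" by (metis count_eq_zero_iff one_neq_zero set_mset_mset)
  then obtain ys1 ys2 where y1: "ys = ys1 @ m # ys2" and ny1: "m \<notin> set ys1" by (metis split_list_first)
  have "count (mset ys1) m = 0" using ny1 by (metis count_eq_zero_iff set_mset_mset)
  hence "count (mset ys2) m = 0" using cy y1 by simp
  hence ny2: "m \<notin> set ys2" by (metis count_eq_zero_iff set_mset_mset)
  have e1: "ys1 = []"
  proof (rule ccontr)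
    assume ne: "ys1 \<noteq> []"
    let ?a = "length xs" and ?c = "length xs + 1" and ?b = "length xs + 1 + length ys1"
    have ta: "t ! ?a = m" using t1 by simp
    have tb: "t ! ?b = m" using t1 y1 by (simp add: nth_append)
    have tc: "t ! ?c = hd ys1" using t1 y1 ne by (simp add: nth_append hd_conv_nth)
    have "?c < ?b" using ne by simp
    moreover have "?b < length t" using t1 y1 by simp
    ultimately have "t ! ?c > m" using Pt[of ?a ?c ?b] ta tb by simp
    moreover have "hd ys1 \<in> set t" using t1 y1 ne by simp
    ultimately have "hd ys1 > m" "hd ys1 \<le> m" using setb tc by auto
    thus False by simp
  qed
  define s where "s = xs @ ys2"
  define i where "i = length xs"
  have ti: "t = ins i m s" using t1 y1 e1 unfolding ins_def s_def i_def by simp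
  have il: "i \<le> length s" unfolding i_def s_def by simp
  have ms: "mset s = M n" using mt ti mset_ins[of i m s] by simp
  have "\<forall>a b c. a < c \<and> c < b \<and> b < length s \<and> s ! a = s ! b \<longrightarrow> s ! c > s ! a"
  proof (intro allI impI)
    fix a b c assume h: "a < c \<and> c < b \<and> b < length s \<and> s ! a = s ! b"
    define f where "f j = (if j < i then j else j + 2)" for j
    have tf: "\<And>j. j < length s \<Longrightarrow> t ! (f j) = s ! j"
      using ti nth_ins[OF il] unfolding f_def by auto
    have "f a < f c" "f c < f b" "f b < length t" using h ti length_ins[OF il] unfolding f_def by auto
    moreover have "a < length s" "c < length s" using h by auto
    moreover have "t ! (f a) = t ! (f b)" using tf h \<open>a < length s\<close> by simp
    ultimately have "t ! (f c) > t ! (f a)" using Pt[of "f a" "f c" "f b"] by blast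
    thus "s ! c > s ! a" using tf \<open>a < length s\<close> \<open>c < length s\<close> by simp
  qed
  hence "s \<in> stirling_perms n" using ms unfolding stirling_perms_def by blast
  thus ?thesis using ti il m_def by blast
qed

lemma app_unique: "xs @ m # ys = xs' @ m # ys' \<Longrightarrow> m \<notin> set xs \<Longrightarrow> m \<notin> set xs' \<Longrightarrow> xs = xs' \<and> ys = ys'"
proof (induct xs arbitrary: xs')
  case Nil then show ?case by (cases xs') auto
next
  case (Cons a xs) then show ?case by (cases xs') auto
qed

lemma ins_inj:
  assumes "m \<notin> set s" "m \<notin> set s'" "i \<le> length s" "i' \<le> length s'" "ins i m s = ins i' m s'"
  shows "i = i' \<and> s = s'"
proof -
  have "m \<notin> set (take i s)" "m \<notin> set (take i' s')" using assms(1,2) by (meson in_set_takeD)+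
  hence "take i s = take i' s' \<and> m # drop i s = m # drop i' s'"
    using app_unique[of "take i s" m "m # drop i s" "take i' s'" "m # drop i' s'"] assms(5)
    unfolding ins_def by simp
  moreover have "length (take i s) = i" "length (take i' s') = i'" using assms(3,4) by auto
  ultimately show ?thesis by (metis append_take_drop_id list.inject)
qed

lemma fp_char: "j < length t \<Longrightarrow> t!j = k \<Longrightarrow> (\<forall>j'<j. t!j' \<noteq> k) \<Longrightarrow> first_pos t k = j+1"
  unfolding first_pos_def
  by (subst Least_equality[of _ j]) (auto simp: not_less[symmetric])

lemma fp_exists: "k \<in> set t \<Longrightarrow> \<exists>j. j<length t \<and> t!j=k \<and> (\<forall>j'<j. t!j'\<noteq>k)"
proof -
  assume "k \<in> set t"
  then obtain j0 where j0: "j0 < length t" "t!j0 = k" by (metis in_set_conv_nth)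
  define g where "g = (LEAST j. j < length t \<and> t!j = k)"
  have "g < length t \<and> t!g = k" unfolding g_def using j0 by (metis (mono_tags, lifting) LeastI)
  moreover have "\<forall>j'<g. t!j' \<noteq> k"
  proof (intro allI impI)
    fix j' assume "j' < g"
    hence "\<not> (j' < length t \<and> t!j' = k)" unfolding g_def by (rule not_less_Least)
    moreover have "j' < length t" using \<open>j' < g\<close> calculation \<open>g < length t \<and> t!g = k\<close> by simp
    ultimately show "t!j' \<noteq> k" by simp
  qed
  ultimately show ?thesis by blast
qed

lemma fp_ins_new: "m \<notin> set s \<Longrightarrow> i \<le> length s \<Longrightarrow> first_pos (ins i m s) m = i+1"
  apply (rule fp_char)
  using nth_ins[of i s _ m] length_ins[of i s m]
  by (auto simp: in_set_conv_nth)

lemma fp_ins_old: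
  assumes m: "m \<notin> set s" and i: "i \<le> length s" and k: "k \<in> set s"
  shows "even (first_pos (ins i m s) k) = even (first_pos s k)"
proof -
  obtain g where g: "g < length s" "s!g = k" "\<forall>j'<g. s!j' \<noteq> k" using fp_exists[OF k] by blast
  have fs: "first_pos s k = g + 1" using fp_char g by blast
  have km: "k \<noteq> m" using m k by blast
  show ?thesis
  proof (cases "g < i")
    case True
    have "first_pos (ins i m s) k = g + 1"
      apply (rule fp_char)
      using True g nth_ins[OF i] length_ins[OF i] by auto
    then show ?thesis using fs by simp
  next
    case False
    have "first_pos (ins i m s) k = (g + 2) + 1"
    proof (rule fp_char)
      show "g + 2 < length (ins i m s)" using g length_ins[OF i] by simp
      show "ins i m s ! (g+2) = k" using g nth_ins[OF i, of "g+2"] False by simp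
      show "\<forall>j'<g + 2. ins i m s ! j' \<noteq> k"
      proof (intro allI impI)
        fix j' assume "j' < g + 2"
        thus "ins i m s ! j' \<noteq> k" using g nth_ins[OF i, of j'] False km by auto
      qed
    qed
    then show ?thesis using fs by simp
  qed
qed

lemma set_ins: "set (ins i m s) = insert m (set s)"
proof -
  have "set s = set (take i s) \<union> set (drop i s)" by (metis append_take_drop_id set_append)
  thus ?thesis unfolding ins_def by auto
qed

lemma odd_ins:
  assumes m: "m \<notin> set s" and i: "i \<le> length s"
  shows "odd_entries (ins i m s) = odd_entries s + (if even i then 1 else 0)"
    and "even_entries (ins i m s) = even_entries s + (if even i then 0 else 1)"
proof -
  let ?t = "ins i m s"
  have old: "\<And>k. k \<in> set s \<Longrightarrow> even (first_pos ?t k) = even (first_pos s k)"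
    using fp_ins_old[OF m i] by blast
  have new: "first_pos ?t m = i + 1" using fp_ins_new[OF m i] .
  have e1: "{k \<in> set ?t. odd (first_pos ?t k)} =
      (if even i then insert m {k \<in> set s. odd (first_pos s k)} else {k \<in> set s. odd (first_pos s k)})"
    by (cases "even i") (auto simp: set_ins new old)
  have e2: "{k \<in> set ?t. even (first_pos ?t k)} =
      (if even i then {k \<in> set s. even (first_pos s k)} else insert m {k \<in> set s. even (first_pos s k)})"
    by (cases "even i") (auto simp: set_ins new old)
  show "odd_entries ?t = odd_entries s + (if even i then 1 else 0)"
    unfolding odd_entries_def e1 using m by auto
  show "even_entries ?t = even_entries s + (if even i then 0 else 1)"
    unfolding even_entries_def e2 using m by auto
qed

lemma perms_0: "stirling_perms 0 = {[]}"
  unfolding stirling_perms_def by auto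

lemma perms_Suc: "stirling_perms (Suc n) = (\<lambda>(s,i). ins i (Suc n) s) ` (stirling_perms n \<times> {..2*n})"
proof
  show "stirling_perms (Suc n) \<subseteq> (\<lambda>(s,i). ins i (Suc n) s) ` (stirling_perms n \<times> {..2*n})"
  proof
    fix t assume "t \<in> stirling_perms (Suc n)"
    then obtain s i where "s \<in> stirling_perms n" "i \<le> length s" "t = ins i (Suc n) s"
      using stirling_decomp by blast
    thus "t \<in> (\<lambda>(s,i). ins i (Suc n) s) ` (stirling_perms n \<times> {..2*n})"
      using stirling_length by force
  qed
  show "(\<lambda>(s,i). ins i (Suc n) s) ` (stirling_perms n \<times> {..2*n}) \<subseteq> stirling_perms (Suc n)"
    using ins_stirling stirling_length by fastforce
qed

lemma notin_perm: "s \<in> stirling_perms n \<Longrightarrow> Suc n \<notin> set s"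
  using stirling_set by fastforce

lemma inj_Suc: "inj_on (\<lambda>(s,i). ins i (Suc n) s) (stirling_perms n \<times> {..2*n})"
proof (rule inj_onI)
  fix x y assume h: "x \<in> stirling_perms n \<times> {..2*n}" "y \<in> stirling_perms n \<times> {..2*n}"
    "(\<lambda>(s,i). ins i (Suc n) s) x = (\<lambda>(s,i). ins i (Suc n) s) y"
  obtain s i where x: "x = (s,i)" by (cases x)
  obtain s' i' where y: "y = (s',i')" by (cases y)
  have "s \<in> stirling_perms n" "s' \<in> stirling_perms n" "i \<le> 2*n" "i' \<le> 2*n"
    "ins i (Suc n) s = ins i' (Suc n) s'" using h x y by auto
  thus "x = y" using ins_inj[of "Suc n" s s' i i'] notin_perm stirling_length x y by auto
qed

lemma finite_perms: "finite (stirling_perms n)"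
  by (induct n) (simp_all add: perms_0 perms_Suc)

lemma sum_alt: "(\<Sum>i\<le>2*n. if even i then p else q) = of_nat (Suc n) * p + of_nat n * (q::'a::comm_ring_1)"
proof (induct n)
  case 0 then show ?case by simp
next
  case (Suc n)
  have "2 * Suc n = Suc (Suc (2 * n))" by simp
  then show ?case using Suc by (simp add: algebra_simps)
qed

lemma E_Suc: "E_poly (Suc n) p q = E_poly n p q * (of_nat (Suc n) * p + of_nat n * (q::'a::comm_ring_1))"
proof -
  let ?w = "\<lambda>\<sigma>. p ^ odd_entries \<sigma> * q ^ even_entries \<sigma>"
  have w: "\<And>s i. s \<in> stirling_perms n \<Longrightarrow> i \<le> 2*n \<Longrightarrow> ?w (ins i (Suc n) s) = ?w s * (if even i then p else q)"
    using odd_ins notin_perm stirling_length by (simp add: algebra_simps)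
  have "E_poly (Suc n) p q = (\<Sum>(s,i)\<in>stirling_perms n \<times> {..2*n}. ?w (ins i (Suc n) s))"
    unfolding E_poly_def perms_Suc by (subst sum.reindex[OF inj_Suc]) (intro sum.cong refl; auto)
  also have "\<dots> = (\<Sum>s\<in>stirling_perms n. \<Sum>i\<le>2*n. ?w (ins i (Suc n) s))"
    by (simp add: sum.cartesian_product)
  also have "\<dots> = (\<Sum>s\<in>stirling_perms n. ?w s * (\<Sum>i\<le>2*n. if even i then p else q))"
    by (intro sum.cong refl) (simp add: w sum_distrib_left)
  also have "\<dots> = E_poly n p q * (of_nat (Suc n) * p + of_nat n * q)"
    unfolding E_poly_def sum_alt by (simp add: sum_distrib_right)
  finally show ?thesis .
qed

lemma E_prod: "E_poly n p q = (\<Prod>j<n. p + of_nat j * (p + (q::'a::comm_ring_1)))"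
proof (induct n)
  case 0 then show ?case by (simp add: E_poly_def perms_0 odd_entries_def even_entries_def)
next
  case (Suc n) then show ?case by (simp add: E_Suc algebra_simps)
qed

lemma fact_aux: "(\<Prod>j<n. p + of_nat j * (p::'a::comm_ring_1)) = of_nat (fact n) * p ^ n"
  by (induct n) (simp_all add: algebra_simps)

theorem theorem4:
  fixes n :: nat and p q :: "'a::comm_ring_1"
  assumes "n \<ge> 1"
  shows "E_poly n p q = (\<Sum>k\<le>n. of_nat (stirling n k) * p ^ k * (p + q) ^ (n - k))
    \<and> (n \<ge> 2 \<longrightarrow>
         E_poly n (1::int) 1 = int (odd_double_fact n)
       \<and> E_poly n p 0 = of_nat (fact n) * p ^ n
       \<and> E_poly n (1::int) (-1) = 1
       \<and> E_poly n (-1::int) 1 = (-1) ^ n)"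
proof (intro conjI impI)
  show "E_poly n p q = (\<Sum>k\<le>n. of_nat (stirling n k) * p ^ k * (p + q) ^ (n - k))"
    by (simp add: E_prod stirling_hom)
  show "E_poly n (1::int) 1 = int (odd_double_fact n)"
    by (simp add: E_prod odd_double_fact_def of_nat_prod algebra_simps)
  show "E_poly n p 0 = of_nat (fact n) * p ^ n"
    by (simp add: E_prod fact_aux)
  show "E_poly n (1::int) (-1) = 1"
    by (simp add: E_prod)
  show "E_poly n (-1::int) 1 = (-1) ^ n"
    by (simp add: E_prod)
qed

end
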